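(* Let $X$ be a space containing an open subspace $O$ that is almost zero-dimensional, with $O\neq\varnothing$ and $X\setminus O\neq\varnothing$. Then $X$ is not $\sigma$-connected; that is, either $X$ is not connected, or $X$ is the union of countably infinitely many pairwise disjoint non-empty closed subsets.
   Context: All spaces are separable and metrizable. A subset $A$ of $X$ is a C-set in $X$ if it is an intersection of clopen subsets of $X$. A space is almost zero-dimensional if every point has a neighborhood basis consisting of C-sets in it. A connected space is $\sigma$-connected if it cannot be written as the union of $\omega$-many (countably infinitely many) pairwise disjoint non-empty closed subsets. *)

theory Defs
  imports "HOL-Analysis.Analysis"
begin

definition C_set :: "'a topology \<Rightarrow> 'a set \<Rightarrow> bool" where
  "C_set X A \<longleftrightarrow>
     (\<exists>\<U>. (\<forall>U\<in>\<U>. closedin X U \<and> openin X U) \<and> A = topspace X \<inter> \<Inter>\<U>)"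

definition almost_zero_dimensional :: "'a topology \<Rightarrow> bool" where
  "almost_zero_dimensional X \<longleftrightarrow>
     (\<forall>x\<in>topspace X. \<forall>U. openin X U \<and> x \<in> U \<longrightarrow>
        (\<exists>V. C_set X V \<and> x \<in> X interior_of V \<and> V \<subseteq> U))"

definition sigma_connected :: "'a topology \<Rightarrow> bool" where
  "sigma_connected X \<longleftrightarrow> connected_space X \<and>
     \<not> (\<exists>F :: nat \<Rightarrow> 'a set.
          (\<forall>n. closedin X (F n) \<and> F n \<noteq> {}) \<and>
          (\<forall>m n. m \<noteq> n \<longrightarrow> F m \<inter> F n = {}) \<and>
          (\<Union>n. F n) = topspace X)"

end

theory Submission
  imports Defs
begin

lemma sep_metr_second_countable:
  assumes "separable_space X" "metrizable_space X"
  shows "second_countable X"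
proof -
  obtain M d where md: "Metric_space M d" "X = Metric_space.mtopology M d"
    using assms(2) unfolding metrizable_space_def by blast
  interpret Metric_space M d by (rule md(1))
  obtain C where C: "countable C" "C \<subseteq> M" "mtopology closure_of C = M"
    using assms(1) unfolding separable_space_def md(2) by auto
  define B where "B = (\<lambda>(c,n). mball c (inverse (real (Suc n)))) ` (C \<times> (UNIV::nat set))"
  have "countable B" unfolding B_def using C(1) by auto
  moreover have "\<forall>V\<in>B. openin mtopology V" unfolding B_def by auto
  moreover have "\<exists>V\<in>B. x \<in> V \<and> V \<subseteq> W" if oW0: "openin mtopology W" and xW: "x \<in> W" for W x
  proof -
    have oW: "W \<subseteq> M \<and> (\<forall>x. x \<in> W \<longrightarrow> (\<exists>r>0. mball x r \<subseteq> W))"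
      using oW0 unfolding openin_mtopology .
    then obtain r where r: "r > 0" "mball x r \<subseteq> W" using xW by blast
    have xM: "x \<in> M" using xW oW by blast
    obtain n where n: "inverse (real (Suc n)) < r/2" using reals_Archimedean[of "r/2"] r by auto
    have "x \<in> mtopology closure_of C" using C(3) xM by simp
    then have "\<forall>r>0. \<exists>y \<in> C. y \<in> mball x r" unfolding metric_closure_of by blast
    moreover have "inverse (real (Suc n)) > 0" by simp
    ultimately obtain c where c: "c \<in> C" "c \<in> mball x (inverse (real (Suc n)))"
      by blast
    have "x \<in> mball c (inverse (real (Suc n)))" using c by (simp add: commute)
    moreover have "mball c (inverse (real (Suc n))) \<subseteq> mball x r"
    proof
      fix z assume "z \<in> mball c (inverse (real (Suc n)))"
      then have "z \<in> M" "d c z < inverse (real (Suc n))" by auto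
      moreover have "d x c < inverse (real (Suc n))" using c by auto
      moreover have "c \<in> M" using c by auto
      ultimately have "d x z < r" using triangle[of x c z] xM n by linarith
      then show "z \<in> mball x r" using xM \<open>z \<in> M\<close> by simp
    qed
    moreover have "mball c (inverse (real (Suc n))) \<in> B" unfolding B_def using c by force
    ultimately show ?thesis using r by blast
  qed
  ultimately show ?thesis unfolding second_countable_def md(2) by (intro exI[of _ B]) blast
qed

definition DC :: "'a topology \<Rightarrow> 'a set \<Rightarrow> bool" where
  "DC X S \<longleftrightarrow> (\<exists>F. countable F \<and> (\<forall>A\<in>F. closedin X A) \<and> pairwise disjnt F \<and> \<Union>F = S)"

lemma DC_closed: "closedin X A \<Longrightarrow> DC X A"
  unfolding DC_def by (rule exI[of _ "{A}"]) auto

lemma DC_Union: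
  assumes "countable I" "\<And>i. i \<in> I \<Longrightarrow> DC X (S i)"
    "\<And>i j. i \<in> I \<Longrightarrow> j \<in> I \<Longrightarrow> i \<noteq> j \<Longrightarrow> disjnt (S i) (S j)"
  shows "DC X (\<Union>i\<in>I. S i)"
proof -
  define P where "P i F \<longleftrightarrow> countable F \<and> (\<forall>A\<in>F. closedin X A) \<and> pairwise disjnt F \<and> \<Union>F = S i" for i F
  have "\<forall>i\<in>I. \<exists>F. P i F"
  proof
    fix i assume "i \<in> I"
    then show "\<exists>F. P i F" using assms(2)[of i] unfolding DC_def P_def by blast
  qed
  then have "\<exists>F. \<forall>i\<in>I. P i (F i)" by (rule bchoice)
  then obtain F where F0: "\<forall>i\<in>I. P i (F i)" ..
  have Fc: "countable (F i)" and Fcl: "\<forall>A\<in>F i. closedin X A" and Fp: "pairwise disjnt (F i)"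
    and Fu: "\<Union>(F i) = S i" if "i \<in> I" for i
    using F0 that unfolding P_def by auto
  show ?thesis unfolding DC_def
  proof (intro exI[of _ "\<Union>i\<in>I. F i"] conjI)
    show "countable (\<Union>i\<in>I. F i)" using assms(1) Fc by (rule countable_UN)
    show "\<forall>A\<in>\<Union>i\<in>I. F i. closedin X A" using Fcl by blast
    have "\<Union>(\<Union>i\<in>I. F i) = (\<Union>i\<in>I. \<Union>(F i))" by blast
    also have "\<dots> = (\<Union>i\<in>I. S i)" using Fu by simp
    finally show "\<Union>(\<Union>i\<in>I. F i) = (\<Union>i\<in>I. S i)" .
    show "pairwise disjnt (\<Union>i\<in>I. F i)"
    proof (rule pairwiseI)
      fix A B assume A: "A \<in> (\<Union>i\<in>I. F i)" and B: "B \<in> (\<Union>i\<in>I. F i)" and ne: "A \<noteq> B"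
      from A obtain i where i: "i \<in> I" "A \<in> F i" by blast
      from B obtain j where j: "j \<in> I" "B \<in> F j" by blast
      show "disjnt A B"
      proof (cases "i = j")
        case True
        then show ?thesis using Fp[OF i(1)] i(2) j(2) ne unfolding pairwise_def by blast
      next
        case False
        have "A \<subseteq> S i" using Fu[OF i(1)] i(2) by blast
        moreover have "B \<subseteq> S j" using Fu[OF j(1)] j(2) by blast
        moreover have "disjnt (S i) (S j)" using assms(3)[OF i(1) j(1) False] .
        ultimately show ?thesis unfolding disjnt_def by blast
      qed
    qed
  qed
qed

lemma clopen_fin_inter:
  fixes c :: "nat \<Rightarrow> 'a set"
  assumes "\<And>i. closedin Y (c i) \<and> openin Y (c i)"
  shows "closedin Y (topspace Y \<inter> (\<Inter>i<n. c i)) \<and> openin Y (topspace Y \<inter> (\<Inter>i<n. c i))"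
proof (induction n)
  case 0 then show ?case by simp
next
  case (Suc n)
  have e: "topspace Y \<inter> (\<Inter>i<Suc n. c i) = c n \<inter> (topspace Y \<inter> (\<Inter>i<n. c i))"
    by (auto simp: lessThan_Suc)
  show ?case unfolding e using Suc assms[of n] by (auto intro: closedin_Int openin_Int)
qed

lemma closed_clopen:
  assumes "closedin X A" "A \<subseteq> U" "closedin (subtopology X U) C" "openin (subtopology X U) C"
  shows "closedin X (A \<inter> C) \<and> closedin X (A - C)"
proof
  from assms(3) obtain T where T: "closedin X T" "C = T \<inter> U"
    unfolding closedin_subtopology by blast
  have "A \<inter> C = A \<inter> T" using T(2) assms(2) by blast
  moreover have "closedin X (A \<inter> T)" using T(1) assms(1) by (rule closedin_Int[rotated])
  ultimately show "closedin X (A \<inter> C)" by simp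
next
  from assms(4) obtain G where G: "openin X G" "C = G \<inter> U"
    unfolding openin_subtopology by blast
  have "A - C = A - G" using G(2) assms(2) by blast
  moreover have "closedin X (A - G)" using assms(1) G(1) by (rule closedin_diff)
  ultimately show "closedin X (A - C)" by simp
qed

lemma DC_diff_Cset:
  fixes c :: "nat \<Rightarrow> 'a set"
  assumes U: "U \<subseteq> topspace X" and A: "closedin X A" "A \<subseteq> U"
    and c: "\<And>i. closedin (subtopology X U) (c i) \<and> openin (subtopology X U) (c i)"
  shows "DC X (A - (U \<inter> \<Inter>(range c)))"
proof -
  let ?Y = "subtopology X U"
  define P where "P n = (A \<inter> (topspace ?Y \<inter> (\<Inter>i<n. c i))) - c n" for n
  have cl: "closedin X (P n)" for n
  proof -
    have "closedin X (A \<inter> (topspace ?Y \<inter> (\<Inter>i<n. c i)))"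
      using closed_clopen[OF A] clopen_fin_inter[of ?Y c n, OF c] by blast
    moreover have "A \<inter> (topspace ?Y \<inter> (\<Inter>i<n. c i)) \<subseteq> U" using A by blast
    ultimately show ?thesis unfolding P_def using closed_clopen c by blast
  qed
  have disj: "disjnt (P m) (P n)" if "m < n" for m n
    using that unfolding P_def disjnt_def by auto
  show ?thesis unfolding DC_def
  proof (intro exI[of _ "range P"] conjI)
    show "countable (range P)" by simp
    show "\<forall>B\<in>range P. closedin X B" using cl by auto
    show "pairwise disjnt (range P)"
    proof (rule pairwiseI)
      fix B B' assume "B \<in> range P" "B' \<in> range P" "B \<noteq> B'"
      then obtain m n where "B = P m" "B' = P n" "m \<noteq> n" by auto
      then show "disjnt B B'" using disj[of m n] disj[of n m] by (metis disjnt_sym linorder_neqE_nat)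
    qed
    show "\<Union>(range P) = A - (U \<inter> \<Inter>(range c))"
    proof
      show "\<Union>(range P) \<subseteq> A - (U \<inter> \<Inter>(range c))" unfolding P_def by auto
      show "A - (U \<inter> \<Inter>(range c)) \<subseteq> \<Union>(range P)"
      proof
        fix y assume y: "y \<in> A - (U \<inter> \<Inter>(range c))"
        then have yU: "y \<in> U" using A by blast
        then have ex: "\<exists>i. y \<notin> c i" using y by blast
        define n where "n = (LEAST i. y \<notin> c i)"
        have "y \<notin> c n" unfolding n_def using LeastI_ex[OF ex] .
        moreover have "y \<in> c i" if "i < n" for i using not_less_Least[OF that[unfolded n_def]] by blast
        moreover have "y \<in> topspace ?Y" using yU U by auto
        ultimately have "y \<in> P n" unfolding P_def using y by auto
        then show "y \<in> \<Union>(range P)" by blast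
      qed
    qed
  qed
qed

lemma DC_diff:
  fixes c :: "nat \<Rightarrow> 'a set"
  assumes U: "U \<subseteq> topspace X" and W: "DC X W" "W \<subseteq> U"
    and c: "\<And>i. closedin (subtopology X U) (c i) \<and> openin (subtopology X U) (c i)"
  shows "DC X (W - (U \<inter> \<Inter>(range c)))"
proof -
  obtain F where F: "countable F" "\<forall>A\<in>F. closedin X A" "pairwise disjnt F" "\<Union>F = W"
    using W(1) unfolding DC_def by blast
  have e: "W - (U \<inter> \<Inter>(range c)) = (\<Union>A\<in>F. A - (U \<inter> \<Inter>(range c)))"
    unfolding F(4)[symmetric] by blast
  show ?thesis unfolding e
  proof (rule DC_Union[OF F(1)])
    fix A assume "A \<in> F"
    then have "closedin X A" "A \<subseteq> U" using F W(2) by blast+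
    then show "DC X (A - (U \<inter> \<Inter>(range c)))"
      by (intro DC_diff_Cset[OF U _ _ c])
  next
    fix A B assume "A \<in> F" "B \<in> F" "A \<noteq> B"
    then show "disjnt (A - (U \<inter> \<Inter>(range c))) (B - (U \<inter> \<Inter>(range c)))"
      using F(3) by (auto simp: pairwise_def disjnt_def)
  qed
qed


lemma not_sigma:
  assumes "countable F" "\<forall>A\<in>F. closedin X A" "pairwise disjnt F" "\<Union>F = topspace X"
    "A \<in> F" "B \<in> F" "A \<noteq> {}" "B \<noteq> {}" "A \<noteq> B"
  shows "\<not> sigma_connected X"
proof
  assume sc: "sigma_connected X"
  define N where "N = F - {{}}"
  have cN: "countable N" using assms(1) N_def by auto
  show False
  proof (cases "finite N")
    case False
    have bij: "bij_betw (from_nat_into N) UNIV N" using bij_betw_from_nat_into[OF cN False] .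
    let ?G = "from_nat_into N"
    have GN: "?G n \<in> N" for n using bij unfolding bij_betw_def by blast
    have "(\<forall>n. closedin X (?G n) \<and> ?G n \<noteq> {}) \<and> (\<forall>m n. m \<noteq> n \<longrightarrow> ?G m \<inter> ?G n = {}) \<and> (\<Union>n. ?G n) = topspace X"
    proof (intro conjI allI impI)
      fix n show "closedin X (?G n)" "?G n \<noteq> {}"
        using GN[of n] assms(2) unfolding N_def by auto
    next
      fix m n :: nat assume "m \<noteq> n"
      then have "?G m \<noteq> ?G n" using bij unfolding bij_betw_def inj_def by blast
      moreover have "?G m \<in> F" "?G n \<in> F" using GN[of m] GN[of n] unfolding N_def by auto
      ultimately show "?G m \<inter> ?G n = {}" using assms(3) by (auto simp: pairwise_def disjnt_def)
    next
      have "(\<Union>n. ?G n) = \<Union>N" using bij unfolding bij_betw_def by simp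
      also have "\<dots> = \<Union>F" unfolding N_def by auto
      finally show "(\<Union>n. ?G n) = topspace X" using assms(4) by simp
    qed
    then show False using sc unfolding sigma_connected_def by blast
  next
    case True
    have cA: "closedin X A" using assms(2,5) by blast
    have dA: "C \<inter> A = {}" if "C \<in> F" "C \<noteq> A" for C
      using assms(3) that assms(5) unfolding pairwise_def disjnt_def by blast
    have "topspace X - A = \<Union>(N - {A})"
    proof
      show "topspace X - A \<subseteq> \<Union>(N - {A})" using assms(4) unfolding N_def by blast
      show "\<Union>(N - {A}) \<subseteq> topspace X - A"
      proof
        fix z assume "z \<in> \<Union>(N - {A})"
        then obtain C where C: "C \<in> F" "C \<noteq> A" "z \<in> C" unfolding N_def by blast
        then have "z \<in> topspace X" using assms(4) by blast
        moreover have "z \<notin> A" using dA[OF C(1,2)] C(3) by blast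
        ultimately show "z \<in> topspace X - A" by blast
      qed
    qed
    moreover have "closedin X (\<Union>(N - {A}))"
    proof (rule closedin_Union)
      show "finite (N - {A})" using True by simp
      show "\<And>C. C \<in> N - {A} \<Longrightarrow> closedin X C" using assms(2) unfolding N_def by blast
    qed
    ultimately have cc: "closedin X (topspace X - A)" by simp
    have Asub: "A \<subseteq> topspace X" using assms(4,5) by blast
    have "topspace X - (topspace X - A) = A" using Asub by blast
    then have oA: "openin X A" using cc unfolding closedin_def by simp
    have Bsub: "B \<subseteq> topspace X" using assms(4,6) by blast
    have "B \<inter> A = {}" using dA[OF assms(6)] assms(9) by blast
    then have "A \<noteq> topspace X" using Bsub assms(8) by blast
    moreover have "connected_space X" using sc unfolding sigma_connected_def by blast
    ultimately show False using oA cA assms(7) unfolding connected_space_clopen_in by blast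
  qed
qed


lemma local_cover:
  assumes sc: "second_countable X" and reg: "regular_space X" and oU: "openin X U"
    and az: "almost_zero_dimensional (subtopology X U)" and y: "y \<in> U"
  shows "\<exists>V c. closedin X V \<and> (\<forall>i::nat. closedin (subtopology X U) (c i) \<and> openin (subtopology X U) (c i))
     \<and> V = U \<inter> \<Inter>(range c) \<and> y \<in> (subtopology X U) interior_of V \<and> V \<subseteq> U"
proof -
  let ?Y = "subtopology X U"
  have Usub: "U \<subseteq> topspace X" using oU openin_subset by blast
  have tY: "topspace ?Y = U" using Usub by auto
  have "neighbourhood_base_of (closedin X) X" using reg unfolding neighbourhood_base_of_closedin .
  then have "\<exists>W K. openin X W \<and> closedin X K \<and> y \<in> W \<and> W \<subseteq> K \<and> K \<subseteq> U"
    using oU y unfolding neighbourhood_base_of by blast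
  then obtain W K where WK: "openin X W" "closedin X K" "y \<in> W" "W \<subseteq> K" "K \<subseteq> U"
    by blast
  have "W = W \<inter> U" using WK by blast
  then have "openin ?Y W" unfolding openin_subtopology using WK(1) by blast
  moreover have "y \<in> topspace ?Y" using y tY by simp
  ultimately have "\<exists>V. C_set ?Y V \<and> y \<in> ?Y interior_of V \<and> V \<subseteq> W"
    using az WK(3) unfolding almost_zero_dimensional_def by blast
  then obtain V where V: "C_set ?Y V" "y \<in> ?Y interior_of V" "V \<subseteq> W"
    by blast
  then obtain \<U> where \<U>: "\<forall>C\<in>\<U>. closedin ?Y C \<and> openin ?Y C" "V = topspace ?Y \<inter> \<Inter>\<U>"
    unfolding C_set_def by blast
  have VU: "V \<subseteq> U" using \<U> tY by auto
  have "closedin ?Y V"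
  proof (cases "\<U> = {}")
    case True
    then have "V = topspace ?Y" using \<U> by simp
    then show ?thesis by (simp only: closedin_topspace)
  next
    case False
    have "closedin ?Y (\<Inter>\<U>)" using False \<U>(1) by (intro closedin_Inter) auto
    then show ?thesis unfolding \<U>(2) by (intro closedin_Int closedin_topspace)
  qed
  then obtain T where T: "closedin X T" "V = T \<inter> U" unfolding closedin_subtopology by blast
  have "V = T \<inter> K" using T WK V(3) by blast
  then have clV: "closedin X V" using T WK by (simp add: closedin_Int)
  let ?S = "topspace ?Y - V"
  have lin: "Lindelof_space (subtopology ?Y ?S)"
    by (intro second_countable_imp_Lindelof_space second_countable_subtopology sc)
  have Ssub: "?S \<subseteq> topspace ?Y" by blast
  have H: "\<forall>\<W>. (\<forall>Q\<in>\<W>. openin ?Y Q) \<and> ?S \<subseteq> \<Union>\<W> \<longrightarrow> (\<exists>V'. countable V' \<and> V' \<subseteq> \<W> \<and> ?S \<subseteq> \<Union>V')"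
    using lin unfolding Lindelof_space_subtopology_subset[OF Ssub] .
  have c1: "\<forall>Q\<in>(\<lambda>C. topspace ?Y - C) ` \<U>. openin ?Y Q" using \<U>(1) by blast
  have c2: "?S \<subseteq> \<Union>((\<lambda>C. topspace ?Y - C) ` \<U>)" using \<U>(2) by blast
  obtain \<W>' where W': "countable \<W>'" "\<W>' \<subseteq> (\<lambda>C. topspace ?Y - C) ` \<U>" "?S \<subseteq> \<Union>\<W>'"
    using H[rule_format, OF conjI[OF c1 c2]] by blast
  then obtain \<U>' where U': "countable \<U>'" "\<U>' \<subseteq> \<U>" "\<W>' = (\<lambda>C. topspace ?Y - C) ` \<U>'"
    using countable_subset_image[of \<W>' "\<lambda>C. topspace ?Y - C" \<U>] by blast
  define \<C> where "\<C> = insert (topspace ?Y) \<U>'"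
  have cC: "countable \<C>" "\<C> \<noteq> {}" using U' \<C>_def by auto
  define c where "c = from_nat_into \<C>"
  have rc: "range c = \<C>" using cC c_def by simp
  have "V = U \<inter> \<Inter>\<C>"
  proof
    show "V \<subseteq> U \<inter> \<Inter>\<C>" using \<U> U'(2) tY unfolding \<C>_def by auto
    show "U \<inter> \<Inter>\<C> \<subseteq> V"
    proof
      fix z assume z: "z \<in> U \<inter> \<Inter>\<C>"
      show "z \<in> V"
      proof (rule ccontr)
        assume "z \<notin> V"
        then have "z \<in> ?S" using z tY by auto
        then have "z \<in> \<Union>\<W>'" using W'(3) by blast
        then obtain C where "C \<in> \<U>'" "z \<notin> C" unfolding U'(3) by blast
        then show False using z unfolding \<C>_def by blast
      qed
    qed
  qed
  then have "V = U \<inter> \<Inter>(range c)" using rc by simp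
  moreover have "\<forall>i. closedin ?Y (c i) \<and> openin ?Y (c i)"
  proof
    fix i
    have "c i \<in> \<C>" using rc by blast
    show "closedin ?Y (c i) \<and> openin ?Y (c i)"
    proof (cases "c i = topspace ?Y")
      case True then show ?thesis by (simp only: closedin_topspace openin_topspace)
    next
      case False
      then have "c i \<in> \<U>" using \<open>c i \<in> \<C>\<close> U'(2) unfolding \<C>_def by blast
      then show ?thesis using \<U>(1) by blast
    qed
  qed
  ultimately show ?thesis using clV V(2) VU by blast
qed

theorem theorem4p11:
  fixes X :: "'a topology" and U :: "'a set"
  assumes "separable_space X" and "metrizable_space X"
    and "openin X U"
    and "almost_zero_dimensional (subtopology X U)"
    and "U \<noteq> {}" and "topspace X - U \<noteq> {}"
  shows "\<not> sigma_connected X"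
proof -
  let ?Y = "subtopology X U"
  have sc: "second_countable X" using sep_metr_second_countable assms(1,2) .
  have reg: "regular_space X" using assms(2) by (rule metrizable_imp_regular_space)
  have Usub: "U \<subseteq> topspace X" using assms(3) openin_subset by blast
  have tY: "topspace ?Y = U" using Usub by auto
  define Q where "Q y V c \<longleftrightarrow> closedin X V \<and> (\<forall>i::nat. closedin ?Y (c i) \<and> openin ?Y (c i))
     \<and> V = U \<inter> \<Inter>(range c) \<and> y \<in> ?Y interior_of V \<and> V \<subseteq> U" for y V and c :: "nat \<Rightarrow> 'a set"
  have "\<forall>y\<in>U. \<exists>p. Q y (fst p) (snd p)"
  proof
    fix y assume "y \<in> U"
    then obtain V c where "Q y V c" using local_cover[OF sc reg assms(3,4)] unfolding Q_def by blast
    then show "\<exists>p. Q y (fst p) (snd p)" by (intro exI[of _ "(V,c)"]) simp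
  qed
  then have "\<exists>g. \<forall>y\<in>U. Q y (fst (g y)) (snd (g y))" by (rule bchoice)
  then obtain g where g: "\<forall>y\<in>U. Q y (fst (g y)) (snd (g y))" ..
  define Vf where "Vf y = fst (g y)" for y
  define cf where "cf y = snd (g y)" for y
  have Vf1: "closedin X (Vf y)" and Vf2: "\<forall>i::nat. closedin ?Y (cf y i) \<and> openin ?Y (cf y i)"
    and Vf3: "Vf y = U \<inter> \<Inter>(range (cf y))" and Vf4: "y \<in> ?Y interior_of (Vf y)"
    and Vf5: "Vf y \<subseteq> U" if "y \<in> U" for y
    using g that unfolding Q_def Vf_def cf_def by blast+
  have linY: "Lindelof_space ?Y"
    by (intro second_countable_imp_Lindelof_space second_countable_subtopology sc)
  have cov1: "\<And>Q. Q \<in> (\<lambda>y. ?Y interior_of (Vf y)) ` U \<Longrightarrow> openin ?Y Q" by auto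
  have cov2: "\<Union>((\<lambda>y. ?Y interior_of (Vf y)) ` U) = topspace ?Y"
  proof
    show "\<Union>((\<lambda>y. ?Y interior_of (Vf y)) ` U) \<subseteq> topspace ?Y"
      by (intro UN_least interior_of_subset_topspace)
    show "topspace ?Y \<subseteq> \<Union>((\<lambda>y. ?Y interior_of (Vf y)) ` U)"
    proof
      fix y assume "y \<in> topspace ?Y"
      then have "y \<in> U" using tY by simp
      then show "y \<in> \<Union>((\<lambda>y. ?Y interior_of (Vf y)) ` U)" using Vf4[of y] by blast
    qed
  qed
  have "\<exists>\<W>. countable \<W> \<and> \<W> \<subseteq> (\<lambda>y. ?Y interior_of (Vf y)) ` U \<and> \<Union>\<W> = topspace ?Y"
    by (rule Lindelof_spaceD[OF linY cov1 cov2])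
  then obtain \<W> where W: "countable \<W>" "\<W> \<subseteq> (\<lambda>y. ?Y interior_of (Vf y)) ` U" "\<Union>\<W> = topspace ?Y"
    apply (elim exE conjE) apply (rule that) apply assumption+ done
  have "\<exists>A'. countable A' \<and> A' \<subseteq> U \<and> \<W> = (\<lambda>y. ?Y interior_of (Vf y)) ` A'"
    by (rule countable_subset_image[THEN iffD1, OF conjI[OF W(1) W(2)]])
  then obtain Y0 where Y0: "countable Y0" "Y0 \<subseteq> U" "\<W> = (\<lambda>y. ?Y interior_of (Vf y)) ` Y0"
    apply (elim exE conjE) apply (rule that) apply assumption+ done
  have Y0ne: "Y0 \<noteq> {}"
  proof
    assume "Y0 = {}"
    then have "\<W> = {}" using Y0(3) by simp
    then have "U = {}" using W(3) tY by simp
    then show False using assms(5) by simp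
  qed
  define V where "V n = Vf (from_nat_into Y0 n)" for n
  define c where "c n = cf (from_nat_into Y0 n)" for n
  have inY0: "from_nat_into Y0 n \<in> U" for n by (rule subsetD[OF Y0(2) from_nat_into[OF Y0ne]])
  have Vn: "closedin X (V n)" "\<forall>i. closedin ?Y (c n i) \<and> openin ?Y (c n i)" "V n = U \<inter> \<Inter>(range (c n))" "V n \<subseteq> U" for n
    using Vf1[OF inY0[of n]] Vf2[OF inY0[of n]] Vf3[OF inY0[of n]] Vf5[OF inY0[of n]]
    unfolding V_def c_def by blast+
  have UV: "(\<Union>n. V n) = U"
  proof
    show "(\<Union>n. V n) \<subseteq> U" using Vn(4) by blast
    show "U \<subseteq> (\<Union>n. V n)"
    proof
      fix y assume "y \<in> U"
      then have "y \<in> \<Union>\<W>" using W(3) tY by simp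
      then obtain y0 where "y0 \<in> Y0" "y \<in> ?Y interior_of (Vf y0)" unfolding Y0(3) by blast
      moreover obtain n where n: "from_nat_into Y0 n = y0"
        using from_nat_into_surj[OF Y0(1) \<open>y0 \<in> Y0\<close>] by blast
      ultimately have "y \<in> ?Y interior_of (V n)" unfolding V_def by simp
      then have "y \<in> V n" using interior_of_subset[of ?Y "V n"] by blast
      then show "y \<in> (\<Union>n. V n)" by blast
    qed
  qed
  define P where "P n k = V n - (\<Union>j<k. V j)" for n k
  have DCP: "DC X (P n k)" for n k
  proof (induction k)
    case 0
    have "P n 0 = V n" unfolding P_def by simp
    then show ?case using DC_closed[OF Vn(1)[of n]] by simp
  next
    case (Suc k)
    have u: "(\<Union>j<Suc k. V j) = V k \<union> (\<Union>j<k. V j)" by (simp add: lessThan_Suc)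
    have e: "P n (Suc k) = P n k - (U \<inter> \<Inter>(range (c k)))"
      unfolding P_def u Vn(3)[of k, symmetric] by blast
    have s1: "P n k \<subseteq> U" unfolding P_def using Vn(4)[of n] by blast
    show ?case unfolding e
      by (rule DC_diff[OF Usub Suc s1]) (use Vn(2)[of k] in blast)
  qed
  have sub: "P m m \<subseteq> V m" for m unfolding P_def by blast
  have excl: "P n n \<inter> V m = {}" if "m < n" for m n unfolding P_def using that by blast
  have "DC X (\<Union>n\<in>UNIV. P n n)"
  proof (rule DC_Union)
    show "countable (UNIV::nat set)" by simp
    show "DC X (P n n)" for n by (rule DCP)
    fix m n :: nat assume "m \<noteq> n"
    then consider "m < n" | "n < m" by linarith
    then show "disjnt (P m m) (P n n)"
    proof cases
      case 1 then show ?thesis using sub[of m] excl[of m n] unfolding disjnt_def by blast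
    next
      case 2 then show ?thesis using sub[of n] excl[of n m] unfolding disjnt_def by blast
    qed
  qed
  moreover have "(\<Union>n. P n n) = U"
  proof
    show "(\<Union>n. P n n) \<subseteq> U" unfolding P_def using Vn(4) by blast
    show "U \<subseteq> (\<Union>n. P n n)"
    proof
      fix y assume "y \<in> U"
      then have ex: "\<exists>n. y \<in> V n" using UV by blast
      define n where "n = (LEAST n. y \<in> V n)"
      have "y \<in> V n" unfolding n_def using LeastI_ex[OF ex] .
      moreover have "y \<notin> V j" if "j < n" for j using not_less_Least[OF that[unfolded n_def]] .
      ultimately have "y \<in> P n n" unfolding P_def by auto
      then show "y \<in> (\<Union>n. P n n)" by blast
    qed
  qed
  ultimately have "DC X U" by simp
  then obtain F where F: "countable F" "\<forall>A\<in>F. closedin X A" "pairwise disjnt F" "\<Union>F = U"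
    unfolding DC_def by blast
  define F' where "F' = insert (topspace X - U) F"
  have F': "countable F'" "\<forall>A\<in>F'. closedin X A" "pairwise disjnt F'" "\<Union>F' = topspace X"
  proof -
    show "countable F'" using F F'_def by simp
    have "closedin X (topspace X - U)" using assms(3) by (intro closedin_diff closedin_topspace)
    then show "\<forall>A\<in>F'. closedin X A" using F(2) unfolding F'_def by blast
    have "\<forall>Y. Y \<in> F \<and> Y \<noteq> topspace X - U \<longrightarrow> disjnt (topspace X - U) Y \<and> disjnt Y (topspace X - U)"
      using F(4) unfolding disjnt_def by blast
    then show "pairwise disjnt F'" unfolding F'_def pairwise_insert using F(3) by blast
    show "\<Union>F' = topspace X" unfolding F'_def using F(4) Usub by blast
  qed
  obtain y where "y \<in> U" using assms(5) by blast
  then obtain A where A: "A \<in> F" "y \<in> A" using F(4) by blast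
  have "A \<noteq> topspace X - U" using A \<open>y \<in> U\<close> by blast
  moreover have "topspace X - U \<in> F'" "A \<in> F'" using A(1) unfolding F'_def by blast+
  moreover have "A \<noteq> {}" using A(2) by blast
  ultimately show ?thesis
    using not_sigma[OF F'] assms(6) by metis
qed

end
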